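(* The class of directed Linear aTAM systems is not intrinsically universal: there is no finite 1D tile set $U$ (and temperature $\tau'$) with computable $\mathcal{R},S$ such that every directed Linear aTAM system $\mathcal{T}$ is simulated, at some scale $m$ under $\mathcal{R}(\mathcal{T})$, by the Linear aTAM system $(U,S(\mathcal{T}),\tau')$.
   Context: 1D aTAM: a tile type has a west glue and an east glue, each a pair (finite string label, nonnegative integer strength); a tile set is finite. Assemblies are partial functions $\alpha:\mathbb{Z}\dashrightarrow T$ with nonempty interval domain; adjacent tiles interact if the east glue of the left equals the west glue of the right with positive strength; $\alpha$ is $\tau$-stable if every cut between consecutive tiles has strength $\ge\tau$. A system $\mathcal{T}=(T,\sigma,\tau)$ has finite $\tau$-stable seed $\sigma$; growth is by single $\tau$-stable tile additions (finite or infinite sequences, result = limit). The Linear aTAM additionally requires that a tile can be added at empty location $p$ only if there is a path in $\mathbb{Z}$ from $p$ to a point outside the minimal bounding interval of the current assembly avoiding its domain. $\mathcal{A}[\mathcal{T}]$ are producible assemblies, $\mathcal{A}_\Box[\mathcal{T}]$ the producible ones admitting no further tile; $\mathcal{T}$ is directed if $|\mathcal{A}_\Box[\mathcal{T}]|=1$. Simulation: an $m$-block over $S$ is a partial function $\{0,\dots,m-1\}\dashrightarrow S$; $\alpha^m_x$ is $i\mapsto\alpha(mx+i)$. A partial $R$ from $m$-blocks to $T$ is valid if $\alpha\sqsubseteq\beta$, $\alpha\in\mathrm{dom}R$ imply $R(\beta)=R(\alpha)$; $R^*(\alpha')$ is $x\mapsto R(\alpha'^m_x)$. $\alpha'$ maps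 cleanly if each nonempty block at $x$ has $x$ or $x\pm1$ in $\mathrm{dom}\,R^*(\alpha')$ (or at most one nonempty block). $\mathcal{S}$ simulates $\mathcal{T}$ under $R$ if: (i) $R^*$ maps $\mathcal{A}[\mathcal{S}]$ onto $\mathcal{A}[\mathcal{T}]$ and $\mathcal{A}_\Box[\mathcal{S}]$ onto $\mathcal{A}_\Box[\mathcal{T}]$, all producible assemblies mapping cleanly; (ii) producible $\alpha'\to^\mathcal{S}\beta'$ implies $R^*(\alpha')\to^\mathcal{T}R^*(\beta')$; (iii) for every $\alpha\in\mathcal{A}[\mathcal{T}]$ there is $\Pi\subset\mathcal{A}[\mathcal{S}]$ with $R^*=\alpha$ on $\Pi$ such that for every producible $\beta$ with $\alpha\to^\mathcal{T}\beta$: each $\alpha'\in\Pi$ produces some $\beta'$ with $R^*(\beta')=\beta$, and whenever producible $\alpha''\to^\mathcal{S}\beta'$ with $R^*(\alpha'')=\alpha$, $R^*(\beta')=\beta$, some $\alpha'\in\Pi$ produces $\alpha''$. *)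

theory Defs
  imports Main "HOL-Library.Nat_Bijection"
begin

type_synonym glue = "string \<times> nat"
type_synonym tile = "glue \<times> glue"
type_synonym assembly = "int \<Rightarrow> tile option"
type_synonym tsys = "tile set \<times> assembly \<times> nat" \<comment> \<open>(T, seed, temperature)\<close>

definition west :: "tile \<Rightarrow> glue" where "west t = fst t"
definition east :: "tile \<Rightarrow> glue" where "east t = snd t"

definition is_assembly :: "assembly \<Rightarrow> bool" where
  "is_assembly \<alpha> \<longleftrightarrow> dom \<alpha> \<noteq> {} \<and>
     (\<forall>x y z. x \<in> dom \<alpha> \<longrightarrow> z \<in> dom \<alpha> \<longrightarrow> x \<le> y \<longrightarrow> y \<le> z \<longrightarrow> y \<in> dom \<alpha>)"

definition bond :: "tile \<Rightarrow> tile \<Rightarrow> nat" where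
  "bond l r = (if east l = west r \<and> snd (east l) > 0 then snd (east l) else 0)"

definition stable :: "nat \<Rightarrow> assembly \<Rightarrow> bool" where
  "stable \<tau> \<alpha> \<longleftrightarrow> (\<forall>x l r. \<alpha> x = Some l \<longrightarrow> \<alpha> (x + 1) = Some r \<longrightarrow> bond l r \<ge> \<tau>)"

definition valid_sys :: "tsys \<Rightarrow> bool" where
  "valid_sys S \<longleftrightarrow> (case S of (T, \<sigma>, \<tau>) \<Rightarrow>
     finite T \<and> is_assembly \<sigma> \<and> finite (dom \<sigma>) \<and> ran \<sigma> \<subseteq> T \<and> stable \<tau> \<sigma>)"

definition bbox :: "assembly \<Rightarrow> int set" where
  "bbox \<alpha> = {y. \<exists>a b. a \<in> dom \<alpha> \<and> b \<in> dom \<alpha> \<and> a \<le> y \<and> y \<le> b}"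

text \<open>Linear aTAM restriction: a path in \<open>\<int>\<close> from \<open>p\<close> to a point outside the
  bounding interval that avoids the domain of the assembly.\<close>
definition linear_ok :: "assembly \<Rightarrow> int \<Rightarrow> bool" where
  "linear_ok \<alpha> p \<longleftrightarrow> (\<exists>q. q \<notin> bbox \<alpha> \<and>
      (\<forall>y. min p q \<le> y \<and> y \<le> max p q \<longrightarrow> y \<notin> dom \<alpha>))"

definition step :: "tsys \<Rightarrow> assembly \<Rightarrow> assembly \<Rightarrow> bool" where
  "step S \<alpha> \<beta> \<longleftrightarrow> (case S of (T, \<sigma>, \<tau>) \<Rightarrow>
     (\<exists>p t. t \<in> T \<and> \<alpha> p = None \<and> linear_ok \<alpha> p \<and> \<beta> = \<alpha>(p \<mapsto> t) \<and>
            is_assembly \<beta> \<and> stable \<tau> \<beta>))"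

definition lim_seq :: "(nat \<Rightarrow> assembly) \<Rightarrow> assembly" where
  "lim_seq f x = (if \<exists>i. f i x \<noteq> None then f (SOME i. f i x \<noteq> None) x else None)"

text \<open>\<open>produces S \<alpha> \<beta>\<close>: \<open>\<beta>\<close> is the result of a finite or infinite sequence of
  single tile additions starting at \<open>\<alpha>\<close> (finite sequences are represented by
  stuttering).\<close>
definition produces :: "tsys \<Rightarrow> assembly \<Rightarrow> assembly \<Rightarrow> bool" where
  "produces S \<alpha> \<beta> \<longleftrightarrow> (\<exists>f. f 0 = \<alpha> \<and> (\<forall>i. f (Suc i) = f i \<or> step S (f i) (f (Suc i)))
                             \<and> \<beta> = lim_seq f)"

definition producible :: "tsys \<Rightarrow> assembly \<Rightarrow> bool" where
  "producible S \<alpha> \<longleftrightarrow> produces S (fst (snd S)) \<alpha>"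

definition terminal :: "tsys \<Rightarrow> assembly \<Rightarrow> bool" where
  "terminal S \<alpha> \<longleftrightarrow> producible S \<alpha> \<and> \<not> (\<exists>\<beta>. step S \<alpha> \<beta>)"

definition directed :: "tsys \<Rightarrow> bool" where
  "directed S \<longleftrightarrow> valid_sys S \<and> card {\<alpha>. terminal S \<alpha>} = 1"

type_synonym block = "tile option list"   \<comment> \<open>an m-block, as a list of length m\<close>
type_synonym rep = "block \<Rightarrow> tile option"

definition mblock :: "nat \<Rightarrow> assembly \<Rightarrow> int \<Rightarrow> block" where
  "mblock m \<alpha> x = map (\<lambda>i. \<alpha> (int m * x + int i)) [0..<m]"

definition block_le :: "block \<Rightarrow> block \<Rightarrow> bool" where
  "block_le a b \<longleftrightarrow> length a = length b \<and>
     (\<forall>i < length a. a ! i \<noteq> None \<longrightarrow> b ! i = a ! i)"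

definition blocks_over :: "nat \<Rightarrow> tile set \<Rightarrow> block set" where
  "blocks_over m U = {b. length b = m \<and> (\<forall>i < m. \<forall>t. b ! i = Some t \<longrightarrow> t \<in> U)}"

definition valid_rep :: "tile set \<Rightarrow> nat \<Rightarrow> rep \<Rightarrow> bool" where
  "valid_rep U m R \<longleftrightarrow> dom R \<subseteq> blocks_over m U \<and>
     (\<forall>a b. a \<in> dom R \<longrightarrow> b \<in> blocks_over m U \<longrightarrow> block_le a b \<longrightarrow> R b = R a)"

definition Rstar :: "nat \<Rightarrow> rep \<Rightarrow> assembly \<Rightarrow> assembly" where
  "Rstar m R \<alpha>' = (\<lambda>x. R (mblock m \<alpha>' x))"

definition nonempty_block :: "nat \<Rightarrow> assembly \<Rightarrow> int \<Rightarrow> bool" where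
  "nonempty_block m \<alpha>' x \<longleftrightarrow> (\<exists>i < m. \<alpha>' (int m * x + int i) \<noteq> None)"

definition maps_cleanly :: "nat \<Rightarrow> rep \<Rightarrow> assembly \<Rightarrow> bool" where
  "maps_cleanly m R \<alpha>' \<longleftrightarrow>
     (\<forall>x. nonempty_block m \<alpha>' x \<longrightarrow>
        (\<exists>y \<in> {x - 1, x, x + 1}. y \<in> dom (Rstar m R \<alpha>'))) \<or>
     (\<forall>x y. nonempty_block m \<alpha>' x \<longrightarrow> nonempty_block m \<alpha>' y \<longrightarrow> x = y)"

definition simulates :: "tsys \<Rightarrow> tsys \<Rightarrow> nat \<Rightarrow> rep \<Rightarrow> bool" where
  "simulates Ssim Tsim m R \<longleftrightarrow>
     0 < m \<and> valid_rep (fst Ssim) m R \<and>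
     \<comment> \<open>(i) equivalent production\<close>
     Rstar m R ` {\<alpha>'. producible Ssim \<alpha>'} = {\<alpha>. producible Tsim \<alpha>} \<and>
     Rstar m R ` {\<alpha>'. terminal Ssim \<alpha>'} = {\<alpha>. terminal Tsim \<alpha>} \<and>
     (\<forall>\<alpha>'. producible Ssim \<alpha>' \<longrightarrow> maps_cleanly m R \<alpha>') \<and>
     \<comment> \<open>(ii) T follows S\<close>
     (\<forall>\<alpha>' \<beta>'. producible Ssim \<alpha>' \<longrightarrow> produces Ssim \<alpha>' \<beta>' \<longrightarrow>
        produces Tsim (Rstar m R \<alpha>') (Rstar m R \<beta>')) \<and>
     \<comment> \<open>(iii) S models T\<close>
     (\<forall>\<alpha>. producible Tsim \<alpha> \<longrightarrow>
        (\<exists>\<Pi>. \<Pi> \<subseteq> {\<alpha>'. producible Ssim \<alpha>'} \<and> (\<forall>\<alpha>' \<in> \<Pi>. Rstar m R \<alpha>' = \<alpha>) \<and>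
           (\<forall>\<beta>. producible Tsim \<beta> \<longrightarrow> produces Tsim \<alpha> \<beta> \<longrightarrow>
              (\<forall>\<alpha>' \<in> \<Pi>. \<exists>\<beta>'. produces Ssim \<alpha>' \<beta>' \<and> Rstar m R \<beta>' = \<beta>) \<and>
              (\<forall>\<alpha>'' \<beta>'. producible Ssim \<alpha>'' \<longrightarrow> produces Ssim \<alpha>'' \<beta>' \<longrightarrow>
                  Rstar m R \<alpha>'' = \<alpha> \<longrightarrow> Rstar m R \<beta>' = \<beta> \<longrightarrow>
                  (\<exists>\<alpha>' \<in> \<Pi>. produces Ssim \<alpha>' \<alpha>'')))))"

datatype recf = Zero | Succ | Proj nat | Comp recf "recf list" | Prim recf recf | Mu recf

inductive reval :: "recf \<Rightarrow> nat list \<Rightarrow> nat \<Rightarrow> bool" where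
  zero: "reval Zero xs 0"
| succ: "reval Succ (x # xs) (Suc x)"
| proj: "i < length xs \<Longrightarrow> reval (Proj i) xs (xs ! i)"
| comp: "length ys = length gs \<Longrightarrow> (\<forall>i < length gs. reval (gs ! i) xs (ys ! i)) \<Longrightarrow>
         reval f ys z \<Longrightarrow> reval (Comp f gs) xs z"
| prim0: "reval g xs z \<Longrightarrow> reval (Prim g h) (0 # xs) z"
| primS: "reval (Prim g h) (n # xs) y \<Longrightarrow> reval h (y # n # xs) z \<Longrightarrow>
          reval (Prim g h) (Suc n # xs) z"
| mu: "reval f (n # xs) 0 \<Longrightarrow> (\<forall>k < n. \<exists>y. 0 < y \<and> reval f (k # xs) y) \<Longrightarrow>
       reval (Mu f) xs n"

definition string_code :: "string \<Rightarrow> nat" where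
  "string_code s = list_encode (map of_char s)"

definition glue_code :: "glue \<Rightarrow> nat" where
  "glue_code g = prod_encode (string_code (fst g), snd g)"

definition tile_code :: "tile \<Rightarrow> nat" where
  "tile_code t = prod_encode (glue_code (fst t), glue_code (snd t))"

definition tileset_code :: "tile set \<Rightarrow> nat" where
  "tileset_code T = set_encode (tile_code ` T)"

definition assembly_code :: "assembly \<Rightarrow> nat" where
  "assembly_code \<alpha> = set_encode ((\<lambda>x. prod_encode (int_encode x, tile_code (the (\<alpha> x)))) ` dom \<alpha>)"

definition sys_code :: "tsys \<Rightarrow> nat" where
  "sys_code S = (case S of (T, \<sigma>, \<tau>) \<Rightarrow>
      prod_encode (tileset_code T, prod_encode (assembly_code \<sigma>, \<tau>)))"

definition block_code :: "block \<Rightarrow> nat" where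
  "block_code b = list_encode (map (\<lambda>ot. case ot of None \<Rightarrow> 0 | Some t \<Rightarrow> Suc (tile_code t)) b)"

definition rep_code :: "nat \<times> rep \<Rightarrow> nat" where
  "rep_code mR = (case mR of (m, R) \<Rightarrow>
      prod_encode (m, set_encode {prod_encode (block_code b, tile_code t) | b t. R b = Some t}))"

definition computable_on_directed :: "(tsys \<Rightarrow> 'a) \<Rightarrow> ('a \<Rightarrow> nat) \<Rightarrow> bool" where
  "computable_on_directed F code \<longleftrightarrow>
     (\<exists>p. \<forall>S. directed S \<longrightarrow> reval p [sys_code S] (code (F S)))"

end

theory Submission
  imports Defs
begin


definition seqok :: "tsys \<Rightarrow> (nat \<Rightarrow> assembly) \<Rightarrow> bool" where
  "seqok S f \<longleftrightarrow> (\<forall>i. f (Suc i) = f i \<or> step S (f i) (f (Suc i)))"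

lemma produces_iff: "produces S a b \<longleftrightarrow> (\<exists>f. f 0 = a \<and> seqok S f \<and> b = lim_seq f)"
  unfolding produces_def seqok_def by blast

lemma step_le: "step S a b \<Longrightarrow> a \<subseteq>\<^sub>m b"
  unfolding step_def map_le_def by (cases S) (auto simp: dom_def)

lemma seq_mono: assumes "seqok S f" "i \<le> j" shows "f i \<subseteq>\<^sub>m f j"
  using assms(2)
proof (induction j rule: dec_induct)
  case base then show ?case by (simp add: map_le_refl)
next
  case (step n)
  have "f n \<subseteq>\<^sub>m f (Suc n)" using assms(1) step_le unfolding seqok_def
    by (metis map_le_refl)
  then show ?case using step.IH map_le_trans by blast
qed

definition mseq :: "(nat \<Rightarrow> assembly) \<Rightarrow> bool" where
  "mseq f \<longleftrightarrow> (\<forall>i j. i \<le> j \<longrightarrow> f i \<subseteq>\<^sub>m f j)"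

lemma seq_mseq: "seqok S f \<Longrightarrow> mseq f"
  using seq_mono mseq_def by blast

lemma mseq_val: "mseq f \<Longrightarrow> f i x = Some v \<Longrightarrow> f j x = Some w \<Longrightarrow> v = w"
proof -
  assume m: "mseq f" and a: "f i x = Some v" and b: "f j x = Some w"
  have "f i \<subseteq>\<^sub>m f (max i j)" "f j \<subseteq>\<^sub>m f (max i j)" using m mseq_def by auto
  then have "\<forall>y\<in>dom (f i). f i y = f (max i j) y" "\<forall>y\<in>dom (f j). f j y = f (max i j) y"
    unfolding map_le_def by auto
  moreover have "x \<in> dom (f i)" "x \<in> dom (f j)" using a b by auto
  ultimately have "f i x = f (max i j) x" "f j x = f (max i j) x" by auto
  then show "v = w" using a b by (metis option.inject)
qed

lemma lim_iff: "mseq f \<Longrightarrow> lim_seq f x = Some v \<longleftrightarrow> (\<exists>i. f i x = Some v)"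
proof
  assume h: "lim_seq f x = Some v"
  show "\<exists>i. f i x = Some v"
  proof (cases "\<exists>i. f i x \<noteq> None")
    case True
    then have "lim_seq f x = f (SOME i. f i x \<noteq> None) x" unfolding lim_seq_def by simp
    then show ?thesis using h by metis
  next
    case False
    then have "lim_seq f x = None" unfolding lim_seq_def by simp
    then show ?thesis using h by simp
  qed
next
  assume m: "mseq f" and "\<exists>i. f i x = Some v"
  then obtain i where i: "f i x = Some v" by blast
  then have ex: "\<exists>i. f i x \<noteq> None" by blast
  then have "f (SOME i. f i x \<noteq> None) x \<noteq> None" by (rule someI_ex)
  then obtain w where w: "f (SOME i. f i x \<noteq> None) x = Some w" by (meson option.exhaust)
  then have "v = w" using mseq_val[OF m i w] by simp
  then show "lim_seq f x = Some v" unfolding lim_seq_def using ex w by simp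
qed

lemma lim_none: "(\<forall>i. f i x = None) \<Longrightarrow> lim_seq f x = None"
  unfolding lim_seq_def by auto

lemma lim_ge: assumes "mseq f" shows "f i \<subseteq>\<^sub>m lim_seq f"
  unfolding map_le_def
proof
  fix x assume "x \<in> dom (f i)"
  then obtain v where "f i x = Some v" by auto
  then show "f i x = lim_seq f x" using lim_iff[OF assms] by metis
qed

lemma lim_eq: "mseq f \<Longrightarrow> (\<forall>j. f j \<subseteq>\<^sub>m f j0) \<Longrightarrow> lim_seq f = f j0"
proof
  fix x assume m: "mseq f" and le: "\<forall>j. f j \<subseteq>\<^sub>m f j0"
  show "lim_seq f x = f j0 x"
  proof (cases "f j0 x")
    case None
    then have "\<forall>i. f i x = None" using le unfolding map_le_def by (metis domIff)
    then show ?thesis using lim_none None by simp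
  next
    case (Some v) then show ?thesis using lim_iff[OF m] by auto
  qed
qed

lemma produces_refl: "produces S a a"
proof -
  have "seqok S (\<lambda>_. a)" unfolding seqok_def by simp
  moreover have "lim_seq (\<lambda>_. a) = a"
    using lim_eq[of "\<lambda>_. a" 0] unfolding mseq_def by (simp add: map_le_refl)
  ultimately show ?thesis unfolding produces_iff by auto
qed

lemma produces_fin:
  assumes "g 0 = a" "seqok S g" "\<forall>j\<ge>K. g j = g K"
  shows "produces S a (g K)"
proof -
  have m: "mseq g" using assms(2) seq_mseq by blast
  have "\<forall>j. g j \<subseteq>\<^sub>m g K"
  proof
    fix j show "g j \<subseteq>\<^sub>m g K"
      using m assms(3) unfolding mseq_def
      by (metis map_le_refl nle_le)
  qed
  then have "lim_seq g = g K" using lim_eq m by blast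
  then show ?thesis using assms unfolding produces_iff by metis
qed

lemma produces_reach:
  assumes "produces S a b" "finite (dom b)"
  shows "\<exists>g N. g 0 = a \<and> seqok S g \<and> g N = b"
proof -
  obtain g where g: "g 0 = a" "seqok S g" "b = lim_seq g" using assms(1) produces_iff by blast
  have m: "mseq g" using g seq_mseq by blast
  have "\<forall>x\<in>dom b. \<exists>i. g i x = b x"
  proof
    fix x assume "x \<in> dom b"
    then obtain v where "b x = Some v" by auto
    then show "\<exists>i. g i x = b x" using g(3) lim_iff[OF m] by metis
  qed
  then obtain idx where idx: "\<forall>x\<in>dom b. g (idx x) x = b x" by metis
  define N where "N = Max (insert 0 (idx ` dom b))"
  have "\<forall>x\<in>dom b. idx x \<le> N" unfolding N_def using assms(2) by auto
  then have dN: "\<forall>x\<in>dom b. g N x = b x" using idx m unfolding mseq_def map_le_def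
    by (metis domIff)
  have "g N \<subseteq>\<^sub>m b" using lim_ge[OF m] g(3) by simp
  then have "g N = b" using dN unfolding map_le_def by (metis domIff ext)
  then show ?thesis using g by blast
qed

lemma produces_trans:
  assumes "produces S a b" "finite (dom b)" "produces S b c"
  shows "produces S a c"
proof -
  obtain g N where g: "g 0 = a" "seqok S g" "g N = b" using produces_reach assms by blast
  obtain f where f: "f 0 = b" "seqok S f" "c = lim_seq f" using assms(3) produces_iff by blast
  define h where "h j = (if j \<le> N then g j else f (j - N))" for j
  have h0: "h 0 = a" using g unfolding h_def by simp
  have hs: "seqok S h" unfolding seqok_def
  proof
    fix i
    show "h (Suc i) = h i \<or> step S (h i) (h (Suc i))"
    proof (cases "Suc i \<le> N")
      case True then show ?thesis using g(2) unfolding h_def seqok_def by auto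
    next
      case False
      then have Ni: "N \<le> i" by simp
      have a1: "h (Suc i) = f (Suc (i - N))" unfolding h_def using False Ni by (simp add: Suc_diff_le)
      have a2: "h i = f (i - N)"
      proof (cases "i = N")
        case True then show ?thesis unfolding h_def using g(3) f(1) by simp
      next
        case False then show ?thesis unfolding h_def using Ni by simp
      qed
      from a1 a2 have "h (Suc i) = f (Suc (i - N))" "h i = f (i - N)" by auto
      then show ?thesis using f(2) unfolding seqok_def by metis
    qed
  qed
  have mh: "mseq h" using hs seq_mseq by blast
  have mf: "mseq f" using f seq_mseq by blast
  have mg: "mseq g" using g seq_mseq by blast
  have "lim_seq h = lim_seq f"
  proof
    fix x
    show "lim_seq h x = lim_seq f x"
    proof (cases "lim_seq f x")
      case None
      then have fn: "\<forall>i. f i x = None" using lim_iff[OF mf] by (metis option.exhaust)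
      have "\<forall>i. h i x = None"
      proof
        fix i show "h i x = None"
        proof (cases "i \<le> N")
          case True
          then have "g i \<subseteq>\<^sub>m g N" using mg mseq_def by blast
          then show ?thesis using True fn f(1) g(3) unfolding h_def map_le_def by (metis domIff)
        next
          case False then show ?thesis using fn unfolding h_def by simp
        qed
      qed
      then show ?thesis using None lim_none by simp
    next
      case (Some v)
      then obtain i where "f i x = Some v" using lim_iff[OF mf] by blast
      moreover have "h (i + N) = f i" unfolding h_def using g(3) f(1) by (cases "i = 0") auto
      ultimately have "h (i + N) x = Some v" by simp
      then have "lim_seq h x = Some v" using lim_iff[OF mh] by blast
      then show ?thesis using Some by simp
    qed
  qed
  then show ?thesis using h0 hs f(3) unfolding produces_iff by metis
qed

lemma step_triple: "step (U, s, \<tau>) a b \<longleftrightarrow> (\<exists>p t. t \<in> U \<and> a p = None \<and> linear_ok a p \<and> b = a(p \<mapsto> t) \<and>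
            is_assembly b \<and> stable \<tau> b)"
  unfolding step_def by simp

lemma seq_inv:
  assumes "seqok (U, s, \<tau>) g" "is_assembly (g 0)" "ran (g 0) \<subseteq> U" "stable \<tau> (g 0)"
  shows "is_assembly (g j) \<and> ran (g j) \<subseteq> U \<and> stable \<tau> (g j)"
proof (induction j)
  case 0 then show ?case using assms by simp
next
  case (Suc j)
  have "g (Suc j) = g j \<or> step (U, s, \<tau>) (g j) (g (Suc j))" using assms(1) seqok_def by blast
  then show ?case
  proof
    assume "g (Suc j) = g j" then show ?thesis using Suc by simp
  next
    assume "step (U, s, \<tau>) (g j) (g (Suc j))"
    then obtain p t where "t \<in> U" "g j p = None" "g (Suc j) = (g j)(p \<mapsto> t)"
       "is_assembly (g (Suc j))" "stable \<tau> (g (Suc j))" unfolding step_triple by blast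
    moreover have "ran (g (Suc j)) \<subseteq> U" using calculation Suc by (simp add: ran_map_upd)
    ultimately show ?thesis by blast
  qed
qed



declare split_paired_All [simp del] split_paired_Ex [simp del]

definition gl :: "nat \<Rightarrow> nat \<Rightarrow> glue" where
  "gl L k = (replicate k (CHR ''a''), if 0 < k \<and> k < L then 1 else 0)"
definition tl :: "nat \<Rightarrow> nat \<Rightarrow> tile" where "tl L k = (gl L k, gl L (Suc k))"
definition Pf :: "nat \<Rightarrow> nat \<Rightarrow> assembly" where
  "Pf L k = (\<lambda>y. if 0 \<le> y \<and> y \<le> int k then Some (tl L (nat y)) else None)"
definition TS :: "nat \<Rightarrow> tsys" where "TS L = (tl L ` {..<L}, Pf L 0, 1)"

lemma bond_tl: "1 \<le> bond (tl L j) (tl L k) \<longleftrightarrow> k = Suc j \<and> Suc j < L"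
proof -
  have e: "east (tl L j) = gl L (Suc j)" "west (tl L k) = gl L k" unfolding east_def west_def tl_def by simp_all
  have r: "replicate (Suc j) (CHR ''a'') = replicate k (CHR ''a'') \<longleftrightarrow> k = Suc j"
    by (simp only: replicate_eq_replicate) auto
  have g: "gl L (Suc j) = gl L k \<longleftrightarrow> k = Suc j"
  proof
    assume "gl L (Suc j) = gl L k" then have "replicate (Suc j) (CHR ''a'') = replicate k (CHR ''a'')"
      unfolding gl_def by (metis fst_conv)
    then show "k = Suc j" using r by blast
  qed simp
  have s: "snd (gl L (Suc j)) = (if Suc j < L then 1 else 0)" unfolding gl_def by simp
  show ?thesis unfolding bond_def e using g s by auto
qed

lemma bond_tl0: "bond t (tl L 0) = 0"
  unfolding bond_def east_def west_def tl_def gl_def by auto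

lemma asm_int: "is_assembly b \<Longrightarrow> x \<in> dom b \<Longrightarrow> z \<in> dom b \<Longrightarrow> x \<le> y \<Longrightarrow> y \<le> z \<Longrightarrow> y \<in> dom b"
  unfolding is_assembly_def by blast

lemma dom_P: "dom (Pf L k) = {0..int k}"
  unfolding Pf_def dom_def by auto

lemma P_some: "Pf L k y \<noteq> None \<longleftrightarrow> 0 \<le> y \<and> y \<le> int k"
  unfolding Pf_def by auto

lemma asm_P: "is_assembly (Pf L k)"
  unfolding is_assembly_def dom_P by auto

lemma stable_P: "k < L \<Longrightarrow> stable 1 (Pf L k)"
  unfolding stable_def
proof (intro allI impI)
  fix x l r assume k: "k < L" and a: "Pf L k x = Some l" and b: "Pf L k (x + 1) = Some r"
  then have x: "0 \<le> x" "x + 1 \<le> int k" "l = tl L (nat x)" "r = tl L (nat (x+1))"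
    unfolding Pf_def by (auto split: if_splits)
  then have "nat (x + 1) = Suc (nat x)" by simp
  moreover have "Suc (nat x) < L" using x k by linarith
  ultimately show "1 \<le> bond l r" using x bond_tl by simp
qed

lemma P_mono: "k \<le> k' \<Longrightarrow> Pf L k \<subseteq>\<^sub>m Pf L k'"
  unfolding map_le_def dom_P unfolding Pf_def by auto

lemma P_upd: "(Pf L k)(int (Suc k) \<mapsto> tl L (Suc k)) = Pf L (Suc k)"
proof
  fix y show "((Pf L k)(int (Suc k) \<mapsto> tl L (Suc k))) y = Pf L (Suc k) y"
  proof (cases "y = int (Suc k)")
    case True
    have "nat (int (Suc k)) = Suc k" by (simp only: nat_int)
    then show ?thesis using True unfolding Pf_def by simp
  next
    case False then show ?thesis unfolding Pf_def by auto
  qed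
qed

lemma bbox_P: "bbox (Pf L k) = {0..int k}"
proof
  show "bbox (Pf L k) \<subseteq> {0..int k}" unfolding bbox_def dom_P by auto
  show "{0..int k} \<subseteq> bbox (Pf L k)" unfolding bbox_def dom_P
  proof
    fix y assume "y \<in> {0..int k}"
    then show "y \<in> {y. \<exists>a b. a \<in> {0..int k} \<and> b \<in> {0..int k} \<and> a \<le> y \<and> y \<le> b}"
      by (intro CollectI exI[of _ 0] exI[of _ "int k"]) auto
  qed
qed

lemma step_T:
  assumes "step (TS L) (Pf L k) b" "k < L"
  shows "Suc k < L \<and> b = Pf L (Suc k)"
proof -
  obtain p t where pt: "t \<in> tl L ` {..<L}" "Pf L k p = None" "b = (Pf L k)(p \<mapsto> t)"
    "is_assembly b" "stable 1 b"
    using assms(1) unfolding TS_def step_triple by blast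
  obtain j where j: "j < L" "t = tl L j" using pt(1) by auto
  have p: "p < 0 \<or> p > int k" using pt(2) P_some by (metis linorder_not_le)
  have d0: "0 \<in> dom b" "p \<in> dom b" using pt(3) P_some by auto
  show ?thesis
  proof (cases "p < 0")
    case True
    have "p = -1"
    proof (rule ccontr)
      assume "p \<noteq> -1"
      have "p \<le> -1" "(-1::int) \<le> 0" using True by auto
      then have "-1 \<in> dom b" using asm_int[OF pt(4) d0(2) d0(1)] by blast
      moreover have "b (-1) = Pf L k (-1)" using pt(3) `p \<noteq> -1` by simp
      moreover have "Pf L k (-1) = None" unfolding Pf_def by simp
      ultimately show False by (simp add: domIff)
    qed
    then have "b (-1) = Some t" "b (-1 + 1) = Some (tl L 0)" using pt(3) unfolding Pf_def by auto
    then have "1 \<le> bond t (tl L 0)" using pt(5) unfolding stable_def by blast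
    then show ?thesis using bond_tl0 by simp
  next
    case False
    then have pk: "p > int k" using p by simp
    have "p = int k + 1"
    proof (rule ccontr)
      assume "p \<noteq> int k + 1"
      have "0 \<le> int k + 1" "int k + 1 \<le> p" using pk by auto
      then have "int k + 1 \<in> dom b" using asm_int[OF pt(4) d0(1) d0(2)] by blast
      moreover have "b (int k + 1) = Pf L k (int k + 1)" using pt(3) `p \<noteq> int k + 1` by simp
      moreover have "Pf L k (int k + 1) = None" unfolding Pf_def by simp
      ultimately show False by (simp add: domIff)
    qed
    then have "b (int k) = Some (tl L k)" "b (int k + 1) = Some t" using pt(3) unfolding Pf_def by auto
    then have "1 \<le> bond (tl L k) (tl L j)" using pt(5) j unfolding stable_def by blast
    then have "j = Suc k" "Suc k < L" using bond_tl by auto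
    moreover have "int k + 1 = int (Suc k)" by simp
    ultimately show ?thesis using pt(3) j `p = int k + 1` P_upd[of L k] by metis
  qed
qed

lemma step_T_ex:
  assumes "Suc k < L" shows "step (TS L) (Pf L k) (Pf L (Suc k))"
  unfolding TS_def step_triple
proof (intro exI conjI)
  show "tl L (Suc k) \<in> tl L ` {..<L}" using assms by auto
  show "Pf L k (int (Suc k)) = None" unfolding Pf_def by simp
  show "linear_ok (Pf L k) (int (Suc k))" unfolding linear_ok_def bbox_P dom_P
    by (rule exI[of _ "int (Suc k)"]) auto
  show "Pf L (Suc k) = (Pf L k)(int (Suc k) \<mapsto> tl L (Suc k))" using P_upd by simp
  show "is_assembly (Pf L (Suc k))" by (rule asm_P)
  show "stable 1 (Pf L (Suc k))" using stable_P assms by simp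
qed

lemma producible_T:
  assumes "produces (TS L) (Pf L 0) X" "0 < L"
  shows "\<exists>k<L. X = Pf L k"
proof -
  obtain f where f: "f 0 = Pf L 0" "seqok (TS L) f" "X = lim_seq f" using assms(1) unfolding produces_iff by blast
  have inv: "\<exists>k<L. f j = Pf L k" for j
  proof (induction j)
    case 0 show ?case using f(1) assms(2) by (intro exI[of _ 0]) simp
  next
    case (Suc j)
    then obtain k where k: "k < L" "f j = Pf L k" by blast
    have "f (Suc j) = f j \<or> step (TS L) (f j) (f (Suc j))" using f(2) unfolding seqok_def by blast
    then show ?case
    proof
      assume "f (Suc j) = f j" then show ?thesis using k by (intro exI[of _ k]) simp
    next
      assume "step (TS L) (f j) (f (Suc j))"
      then have "step (TS L) (Pf L k) (f (Suc j))" using k(2) by simp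
      then have "Suc k < L \<and> f (Suc j) = Pf L (Suc k)" using step_T k(1) by blast
      then show ?thesis by (intro exI[of _ "Suc k"]) simp
    qed
  qed
  define K where "K = {k. \<exists>j. f j = Pf L k}"
  have "K \<subseteq> {..<L}"
  proof
    fix k assume "k \<in> K"
    then obtain j where "f j = Pf L k" unfolding K_def by blast
    moreover obtain k' where "k' < L" "f j = Pf L k'" using inv by blast
    ultimately have "Pf L k = Pf L k'" by simp
    then have "dom (Pf L k) = dom (Pf L k')" by simp
    then have "k = k'" unfolding dom_P by simp
    then show "k \<in> {..<L}" using `k' < L` by simp
  qed
  then have fin1: "finite K" using finite_subset by blast
  have "0 \<in> K" unfolding K_def using f(1) by blast
  then have fin: "finite K" "K \<noteq> {}" using fin1 by auto
  define km where "km = Max K"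
  have "km \<in> K" unfolding km_def using fin by simp
  then obtain j0 where j0: "f j0 = Pf L km" unfolding K_def by blast
  have "\<forall>j. f j \<subseteq>\<^sub>m f j0"
  proof
    fix j obtain k where fk: "f j = Pf L k" using inv by blast
    then have "k \<in> K" unfolding K_def by blast
    then have "k \<le> km" unfolding km_def using fin by simp
    then show "f j \<subseteq>\<^sub>m f j0" using j0 fk P_mono by simp
  qed
  then have "lim_seq f = f j0" using lim_eq seq_mseq[OF f(2)] by blast
  then have "X = f j0" using f(3) by simp
  then show ?thesis using inv by blast
qed

lemma producible_P:
  assumes "k < L" shows "produces (TS L) (Pf L 0) (Pf L k)"
proof -
  define f where "f j = Pf L (min j k)" for j
  have "seqok (TS L) f" unfolding seqok_def
  proof
    fix i show "f (Suc i) = f i \<or> step (TS L) (f i) (f (Suc i))"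
    proof (cases "i < k")
      case True then show ?thesis unfolding f_def using step_T_ex assms by (simp add: min_def)
    next
      case False then show ?thesis unfolding f_def by (simp add: min_def)
    qed
  qed
  moreover have "\<forall>j\<ge>k. f j = f k" unfolding f_def by simp
  ultimately have "produces (TS L) (f 0) (f k)" using produces_fin by blast
  then show ?thesis unfolding f_def by simp
qed

lemma terminal_T:
  assumes "0 < L" shows "terminal (TS L) X \<longleftrightarrow> X = Pf L (L - 1)"
proof
  assume t: "terminal (TS L) X"
  have "\<exists>k<L. X = Pf L k"
    using producible_T[of L X] assms t unfolding terminal_def producible_def by (simp add: TS_def)
  then obtain k where k: "k < L" "X = Pf L k" by blast
  have "\<not> Suc k < L"
  proof
    assume "Suc k < L" then show False using t k step_T_ex unfolding terminal_def by blast
  qed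
  then have "k = L - 1" using k by simp
  then show "X = Pf L (L - 1)" using k by simp
next
  assume x: "X = Pf L (L - 1)"
  have "producible (TS L) X" unfolding producible_def using producible_P[of "L - 1" L] x assms
    by (simp add: TS_def)
  moreover have "\<not> (\<exists>b. step (TS L) X b)"
  proof
    assume "\<exists>b. step (TS L) X b"
    then obtain b where "step (TS L) (Pf L (L - 1)) b" using x by blast
    then show False using step_T[of L "L - 1" b] assms by simp
  qed
  ultimately show "terminal (TS L) X" unfolding terminal_def by blast
qed

lemma directed_T: assumes "0 < L" shows "directed (TS L)"
proof -
  have v1: "is_assembly (Pf L 0)" by (rule asm_P)
  have v2: "finite (dom (Pf L 0))" unfolding dom_P by simp
  have v3: "ran (Pf L 0) \<subseteq> tl L ` {..<L}" unfolding ran_def Pf_def using assms by auto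
  have v4: "stable 1 (Pf L 0)" using stable_P assms by simp
  have "valid_sys (TS L)" unfolding valid_sys_def TS_def using v1 v2 v3 v4 by simp
  moreover have "{\<alpha>. terminal (TS L) \<alpha>} = {Pf L (L - 1)}" using terminal_T assms by auto
  ultimately show ?thesis unfolding directed_def by simp
qed



lemma mblock_empty:
  assumes "\<not> nonempty_block m \<alpha> x" shows "mblock m \<alpha> x = replicate m None"
proof (rule nth_equalityI)
  show "length (mblock m \<alpha> x) = length (replicate m (None::tile option))" unfolding mblock_def by simp
next
  fix i assume "i < length (mblock m \<alpha> x)"
  then have "i < m" unfolding mblock_def by simp
  then show "mblock m \<alpha> x ! i = replicate m None ! i"
    using assms unfolding mblock_def nonempty_block_def by simp
qed

lemma mblock_over:
  assumes "ran \<alpha> \<subseteq> U" shows "mblock m \<alpha> x \<in> blocks_over m U"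
  unfolding blocks_over_def
proof (intro CollectI conjI allI impI)
  show "length (mblock m \<alpha> x) = m" unfolding mblock_def by simp
next
  fix i t assume "i < m" "mblock m \<alpha> x ! i = Some t"
  then have "\<alpha> (int m * x + int i) = Some t" unfolding mblock_def by simp
  then show "t \<in> U" using assms unfolding ran_def by blast
qed

lemma empty_le: "b \<in> blocks_over m U \<Longrightarrow> block_le (replicate m None) b"
  unfolding block_le_def blocks_over_def by simp

lemma nonempty_of:
  assumes "\<alpha> y \<noteq> None" "0 < m" shows "nonempty_block m \<alpha> (y div int m)"
proof -
  have "0 \<le> y mod int m" "y mod int m < int m" using assms by simp_all
  moreover have "int m * (y div int m) + y mod int m = y" by simp
  ultimately have "nat (y mod int m) < m" "int m * (y div int m) + int (nat (y mod int m)) = y" by simp_all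
  then show ?thesis unfolding nonempty_block_def using assms(1) by metis
qed

lemma block_range:
  assumes "0 < m" "-1 \<le> y div int m" "y div int m \<le> 1"
  shows "- int m \<le> y \<and> y < 2 * int m"
proof -
  have e: "y = int m * (y div int m) + y mod int m" by simp
  have r: "0 \<le> y mod int m" "y mod int m < int m" using assms by simp_all
  have "y div int m = -1 \<or> y div int m = 0 \<or> y div int m = 1" using assms by linarith
  then show ?thesis
  proof (elim disjE)
    assume h: "y div int m = -1" then show ?thesis using e r by (simp add: h; linarith)
  next
    assume h: "y div int m = 0" then show ?thesis using e r by (simp add: h; linarith)
  next
    assume h: "y div int m = 1" then show ?thesis using e r by (simp add: h; linarith)
  qed
qed



lemma pump:
  fixes FF :: assembly and p q y0 :: int
  assumes asm: "is_assembly FF" and st: "stable \<tau> FF" and ranU: "ran FF \<subseteq> U"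
    and pq: "p < q" and eq: "FF p = FF q" and qin: "FF q \<noteq> None"
    and above: "\<forall>y>q. FF y = None" and y0: "FF y0 \<noteq> None" "y0 < p"
  shows "\<exists>\<gamma>. \<gamma> 0 = FF \<and> (\<forall>k. step (U, s, \<tau>) (\<gamma> k) (\<gamma> (Suc k))) \<and>
           (\<forall>k y. p \<le> y \<longrightarrow> y \<le> q + int k \<longrightarrow> \<gamma> k y \<noteq> None) \<and>
           (\<forall>k y. y < p \<longrightarrow> \<gamma> k y = FF y)"
proof -
  define d where "d = q - p"
  have d0: "0 < d" using pq d_def by simp
  define c where "c y = FF (p + (y - p) mod d)" for y
  have dom_FF: "FF y \<noteq> None" if "y0 \<le> y" "y \<le> q" for y
    using asm_int[OF asm, of y0 q y] y0 qin that by auto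
  have c1: "c y \<noteq> None" for y
  proof -
    have "0 \<le> (y - p) mod d" "(y - p) mod d < d" using d0 by simp_all
    then show ?thesis unfolding c_def using dom_FF y0(2) d_def by simp
  qed
  have c_eq: "c y = FF y" if "p \<le> y" "y \<le> q" for y
  proof (cases "y < q")
    case True
    then have "(y - p) mod d = y - p" using that d_def by (simp add: mod_pos_pos_trivial)
    then show ?thesis unfolding c_def by simp
  next
    case False
    then have "y = q" using that by simp
    then have "(y - p) mod d = 0" using d_def by simp
    then show ?thesis unfolding c_def using eq `y = q` by simp
  qed
  have cran: "the (c y) \<in> U" for y
  proof -
    obtain t where "c y = Some t" using c1 by blast
    then have "t \<in> ran FF" unfolding c_def ran_def by blast
    then show ?thesis using ranU `c y = Some t` by auto
  qed
  have cbond: "\<tau> \<le> bond l r" if "c y = Some l" "c (y + 1) = Some r" for y l r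
  proof -
    define r0 where "r0 = (y - p) mod d"
    have r0: "0 \<le> r0" "r0 < d" unfolding r0_def using d0 by simp_all
    have m1: "(y + 1 - p) mod d = (r0 + 1) mod d" unfolding r0_def
    proof -
      have "y + 1 - p = (y - p) + 1" by simp
      then show "(y + 1 - p) mod d = ((y - p) mod d + 1) mod d" by (metis mod_add_left_eq)
    qed
    show ?thesis
    proof (cases "r0 + 1 < d")
      case True
      then have "(y + 1 - p) mod d = r0 + 1" using m1 r0 by (simp add: mod_pos_pos_trivial)
      then have "FF (p + r0) = Some l" "FF (p + r0 + 1) = Some r" using that unfolding c_def r0_def
        by (simp_all add: algebra_simps)
      then show ?thesis using st unfolding stable_def by blast
    next
      case False
      then have "r0 + 1 = d" using r0 by simp
      then have "(y + 1 - p) mod d = 0" using m1 by simp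
      then have "FF q = Some r" using that eq unfolding c_def by simp
      moreover have "p + r0 = q - 1" using `r0 + 1 = d` d_def by simp
      then have "FF (q - 1) = Some l" using that(1) unfolding c_def r0_def by simp
      ultimately show ?thesis using st unfolding stable_def by (metis diff_add_cancel)
    qed
  qed
  define \<gamma> where "\<gamma> k y = (if y < p then FF y else if y \<le> q + int k then c y else None)" for k y
  have g_some: "\<gamma> k y \<noteq> None \<longleftrightarrow> (y < p \<and> FF y \<noteq> None) \<or> (p \<le> y \<and> y \<le> q + int k)" for k y
    unfolding \<gamma>_def using c1 by auto
  have g0: "\<gamma> 0 = FF"
  proof
    fix y show "\<gamma> 0 y = FF y"
      unfolding \<gamma>_def using c_eq above by (cases "y < p"; cases "y \<le> q") auto
  qed
  have gstab: "stable \<tau> (\<gamma> k)" for k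
    unfolding stable_def
  proof (intro allI impI)
    fix x l r assume a: "\<gamma> k x = Some l" "\<gamma> k (x + 1) = Some r"
    show "\<tau> \<le> bond l r"
    proof (cases "x + 1 < p")
      case True then have "FF x = Some l" "FF (x + 1) = Some r" using a unfolding \<gamma>_def by auto
      then show ?thesis using st unfolding stable_def by blast
    next
      case False
      then have xp: "p \<le> x + 1" "x + 1 \<le> q + int k" using a(2) g_some by auto
      show ?thesis
      proof (cases "x + 1 = p")
        case True
        then have "FF x = Some l" "c (x + 1) = Some r" using a xp unfolding \<gamma>_def by auto
        moreover have "c (x + 1) = FF (x + 1)" using True c_eq pq by simp
        ultimately show ?thesis using st unfolding stable_def by auto
      next
        case False
        then have "c x = Some l" "c (x + 1) = Some r" using a xp unfolding \<gamma>_def by auto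
        then show ?thesis using cbond by blast
      qed
    qed
  qed
  have gstep: "step (U, s, \<tau>) (\<gamma> k) (\<gamma> (Suc k))" for k
    unfolding step_triple
  proof (intro exI conjI)
    define p' where "p' = q + int k + 1"
    show "the (c p') \<in> U" by (rule cran)
    show "\<gamma> k p' = None" unfolding \<gamma>_def p'_def using pq by auto
    have bb: "\<forall>b\<in>dom (\<gamma> k). b \<le> q + int k"
    proof
      fix b assume "b \<in> dom (\<gamma> k)"
      then have "\<gamma> k b \<noteq> None" by (simp add: domIff)
      then show "b \<le> q + int k" using g_some[of k b] pq by auto
    qed
    have "p' \<notin> bbox (\<gamma> k)"
    proof
      assume "p' \<in> bbox (\<gamma> k)"
      then obtain b where "b \<in> dom (\<gamma> k)" "p' \<le> b" unfolding bbox_def by blast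
      moreover have "b \<le> q + int k" using bb calculation(1) by blast
      ultimately show False using p'_def by linarith
    qed
    then show "linear_ok (\<gamma> k) p'" unfolding linear_ok_def using `\<gamma> k p' = None`
      by (intro exI[of _ p']) auto
    show "\<gamma> (Suc k) = (\<gamma> k)(p' \<mapsto> the (c p'))"
    proof
      fix y show "\<gamma> (Suc k) y = ((\<gamma> k)(p' \<mapsto> the (c p'))) y"
      proof (cases "y = p'")
        case True then show ?thesis unfolding \<gamma>_def p'_def using pq c1 by auto
      next
        case False then show ?thesis unfolding \<gamma>_def p'_def by auto
      qed
    qed
    show "is_assembly (\<gamma> (Suc k))" unfolding is_assembly_def
    proof (intro conjI allI impI)
      show "dom (\<gamma> (Suc k)) \<noteq> {}" using g_some y0 by blast
    next
      fix x y z assume h: "x \<in> dom (\<gamma> (Suc k))" "z \<in> dom (\<gamma> (Suc k))" "x \<le> y" "y \<le> z"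
      show "y \<in> dom (\<gamma> (Suc k))"
      proof (cases "y < p")
        case True
        then have "FF x \<noteq> None" using h g_some by (auto simp: domIff)
        then have "FF y \<noteq> None" using asm_int[OF asm, of x q y] qin True pq h(3) by (auto simp: domIff)
        then show ?thesis using g_some True by (auto simp: domIff)
      next
        case False
        have "z \<le> q + int (Suc k)" using h(2,4) False g_some by (auto simp: domIff)
        then show ?thesis using g_some False h(4) by (auto simp: domIff)
      qed
    qed
    show "stable \<tau> (\<gamma> (Suc k))" by (rule gstab)
  qed
  have "\<forall>k y. p \<le> y \<longrightarrow> y \<le> q + int k \<longrightarrow> \<gamma> k y \<noteq> None" using g_some by blast
  moreover have "\<forall>k y. y < p \<longrightarrow> \<gamma> k y = FF y" unfolding \<gamma>_def by simp
  ultimately show ?thesis using g0 gstep by blast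
qed



theorem mainTheorem9:
  shows "\<not> (\<exists>(U :: tile set) (\<tau>' :: nat) (R :: tsys \<Rightarrow> nat \<times> rep) (S :: tsys \<Rightarrow> assembly).
             finite U \<and>
             computable_on_directed R rep_code \<and>
             computable_on_directed S assembly_code \<and>
             (\<forall>\<T>. directed \<T> \<longrightarrow>
                valid_sys (U, S \<T>, \<tau>') \<and>
                simulates (U, S \<T>, \<tau>') \<T> (fst (R \<T>)) (snd (R \<T>))))"
proof
  assume "\<exists>(U :: tile set) (\<tau>' :: nat) (R :: tsys \<Rightarrow> nat \<times> rep) (S :: tsys \<Rightarrow> assembly).
             finite U \<and>
             computable_on_directed R rep_code \<and>
             computable_on_directed S assembly_code \<and>
             (\<forall>\<T>. directed \<T> \<longrightarrow>
                valid_sys (U, S \<T>, \<tau>') \<and>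
                simulates (U, S \<T>, \<tau>') \<T> (fst (R \<T>)) (snd (R \<T>)))"
  then obtain U \<tau>' RR SS where finU: "finite U" and
    H: "\<forall>\<T>. directed \<T> \<longrightarrow> valid_sys (U, SS \<T>, \<tau>') \<and>
                simulates (U, SS \<T>, \<tau>') \<T> (fst (RR \<T>)) (snd (RR \<T>))" by blast
  define n where "n = card U"
  define L where "L = n + 3"
  have L0: "0 < L" unfolding L_def by simp
  define Tn where "Tn = TS L"
  have dT: "directed Tn" unfolding Tn_def using directed_T L0 by simp
  define \<sigma>' where "\<sigma>' = SS Tn"
  define m where "m = fst (RR Tn)"
  define R where "R = snd (RR Tn)"
  define Sy where "Sy = (U, \<sigma>', \<tau>')"
  have vs: "valid_sys Sy" and sim: "simulates Sy Tn m R"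
    using H dT unfolding Sy_def \<sigma>'_def m_def R_def by auto
  have m0: "0 < m" and vr: "valid_rep U m R"
    and img: "Rstar m R ` {\<alpha>'. producible Sy \<alpha>'} = {\<alpha>. producible Tn \<alpha>}"
    and clean: "\<forall>\<alpha>'. producible Sy \<alpha>' \<longrightarrow> maps_cleanly m R \<alpha>'"
    and iii: "\<forall>\<alpha>. producible Tn \<alpha> \<longrightarrow>
        (\<exists>\<Pi>. \<Pi> \<subseteq> {\<alpha>'. producible Sy \<alpha>'} \<and> (\<forall>\<alpha>' \<in> \<Pi>. Rstar m R \<alpha>' = \<alpha>) \<and>
           (\<forall>\<beta>. producible Tn \<beta> \<longrightarrow> produces Tn \<alpha> \<beta> \<longrightarrow>
              (\<forall>\<alpha>' \<in> \<Pi>. \<exists>\<beta>'. produces Sy \<alpha>' \<beta>' \<and> Rstar m R \<beta>' = \<beta>) \<and>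
              (\<forall>\<alpha>'' \<beta>'. producible Sy \<alpha>'' \<longrightarrow> produces Sy \<alpha>'' \<beta>' \<longrightarrow>
                  Rstar m R \<alpha>'' = \<alpha> \<longrightarrow> Rstar m R \<beta>' = \<beta> \<longrightarrow>
                  (\<exists>\<alpha>' \<in> \<Pi>. produces Sy \<alpha>' \<alpha>''))))"
    using sim unfolding simulates_def Sy_def by auto
  have vs': "finite U" "is_assembly \<sigma>'" "finite (dom \<sigma>')" "ran \<sigma>' \<subseteq> U" "stable \<tau>' \<sigma>'"
    using vs unfolding valid_sys_def Sy_def by auto
  have prodT: "\<exists>k<L. X = Pf L k" if "producible Tn X" for X
    using producible_T[of L X] that L0 unfolding producible_def Tn_def by (simp add: TS_def)
  have prodP: "producible Tn (Pf L k)" if "k < L" for k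
    using producible_P[OF that] unfolding producible_def Tn_def by (simp add: TS_def)
  have prodPP: "produces Tn (Pf L 0) (Pf L k)" if "k < L" for k
    using producible_P[OF that] unfolding Tn_def by simp
  have prodS: "producible Sy X \<longleftrightarrow> produces Sy \<sigma>' X" for X
    unfolding producible_def Sy_def by simp
  have imgT: "\<exists>k<L. Rstar m R X = Pf L k" if "producible Sy X" for X
  proof -
    have "Rstar m R X \<in> {\<alpha>. producible Tn \<alpha>}" using img that by blast
    then show ?thesis using prodT by simp
  qed
  have Rempty: "R (replicate m None) = None"
  proof (rule ccontr)
    assume "R (replicate m None) \<noteq> None"
    then have "replicate m None \<in> dom R" by (simp add: domIff)
    moreover have "mblock m \<sigma>' (-1) \<in> blocks_over m U" using mblock_over vs'(4) by blast
    ultimately have "R (mblock m \<sigma>' (-1)) = R (replicate m None)"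
      using vr empty_le unfolding valid_rep_def by blast
    then have "Rstar m R \<sigma>' (-1) \<noteq> None" unfolding Rstar_def using `R (replicate m None) \<noteq> None` by simp
    moreover have "producible Sy \<sigma>'" using prodS produces_refl by blast
    then obtain k where "Rstar m R \<sigma>' = Pf L k" using imgT by blast
    ultimately show False unfolding Pf_def by simp
  qed
  have NE: "nonempty_block m X x" if "Rstar m R X x \<noteq> None" for X x
  proof (rule ccontr)
    assume "\<not> nonempty_block m X x"
    then have "mblock m X x = replicate m None" by (rule mblock_empty)
    then show False using that Rempty unfolding Rstar_def by simp
  qed
  have ex\<Pi>: "\<exists>\<Pi>. \<Pi> \<subseteq> {\<alpha>'. producible Sy \<alpha>'} \<and> (\<forall>\<alpha>' \<in> \<Pi>. Rstar m R \<alpha>' = Pf L 0) \<and>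
           (\<forall>\<beta>. producible Tn \<beta> \<longrightarrow> produces Tn (Pf L 0) \<beta> \<longrightarrow>
              (\<forall>\<alpha>' \<in> \<Pi>. \<exists>\<beta>'. produces Sy \<alpha>' \<beta>' \<and> Rstar m R \<beta>' = \<beta>) \<and>
              (\<forall>\<alpha>'' \<beta>'. producible Sy \<alpha>'' \<longrightarrow> produces Sy \<alpha>'' \<beta>' \<longrightarrow>
                  Rstar m R \<alpha>'' = Pf L 0 \<longrightarrow> Rstar m R \<beta>' = \<beta> \<longrightarrow>
                  (\<exists>\<alpha>' \<in> \<Pi>. produces Sy \<alpha>' \<alpha>'')))"
    using spec[OF iii, of "Pf L 0"] prodP[OF L0] by (rule mp)
  then obtain \<Pi> where \<Pi>: "\<Pi> \<subseteq> {\<alpha>'. producible Sy \<alpha>'} \<and> (\<forall>\<alpha>' \<in> \<Pi>. Rstar m R \<alpha>' = Pf L 0) \<and>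
           (\<forall>\<beta>. producible Tn \<beta> \<longrightarrow> produces Tn (Pf L 0) \<beta> \<longrightarrow>
              (\<forall>\<alpha>' \<in> \<Pi>. \<exists>\<beta>'. produces Sy \<alpha>' \<beta>' \<and> Rstar m R \<beta>' = \<beta>) \<and>
              (\<forall>\<alpha>'' \<beta>'. producible Sy \<alpha>'' \<longrightarrow> produces Sy \<alpha>'' \<beta>' \<longrightarrow>
                  Rstar m R \<alpha>'' = Pf L 0 \<longrightarrow> Rstar m R \<beta>' = \<beta> \<longrightarrow>
                  (\<exists>\<alpha>' \<in> \<Pi>. produces Sy \<alpha>' \<alpha>'')))" by (rule exE)
  have \<Pi>1: "\<Pi> \<subseteq> {\<alpha>'. producible Sy \<alpha>'}" using \<Pi> by (rule conjunct1)
  have \<Pi>2: "\<forall>\<alpha>' \<in> \<Pi>. Rstar m R \<alpha>' = Pf L 0" using conjunct1[OF conjunct2[OF \<Pi>]] .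
  have \<Pi>3: "\<forall>\<beta>. producible Tn \<beta> \<longrightarrow> produces Tn (Pf L 0) \<beta> \<longrightarrow>
              (\<forall>\<alpha>' \<in> \<Pi>. \<exists>\<beta>'. produces Sy \<alpha>' \<beta>' \<and> Rstar m R \<beta>' = \<beta>) \<and>
              (\<forall>\<alpha>'' \<beta>'. producible Sy \<alpha>'' \<longrightarrow> produces Sy \<alpha>'' \<beta>' \<longrightarrow>
                  Rstar m R \<alpha>'' = Pf L 0 \<longrightarrow> Rstar m R \<beta>' = \<beta> \<longrightarrow>
                  (\<exists>\<alpha>' \<in> \<Pi>. produces Sy \<alpha>' \<alpha>''))" using conjunct2[OF conjunct2[OF \<Pi>]] .
  have "Pf L 0 \<in> Rstar m R ` {\<alpha>'. producible Sy \<alpha>'}" unfolding img using prodP[OF L0] by simp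
  then obtain a2 where a2i: "a2 \<in> {\<alpha>'. producible Sy \<alpha>'}" and a2e: "Pf L 0 = Rstar m R a2" by (rule imageE)
  have a2: "producible Sy a2" "Rstar m R a2 = Pf L 0" using a2i a2e by simp_all
  have h3: "\<forall>\<alpha>'' \<beta>'. producible Sy \<alpha>'' \<longrightarrow> produces Sy \<alpha>'' \<beta>' \<longrightarrow>
                  Rstar m R \<alpha>'' = Pf L 0 \<longrightarrow> Rstar m R \<beta>' = Pf L 0 \<longrightarrow>
                  (\<exists>\<alpha>' \<in> \<Pi>. produces Sy \<alpha>' \<alpha>'')"
    using conjunct2[OF mp[OF mp[OF spec[OF \<Pi>3, of "Pf L 0"] prodP[OF L0]] prodPP[OF L0]]] .
  have "\<exists>\<alpha>' \<in> \<Pi>. produces Sy \<alpha>' a2"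
    using h3[rule_format, OF a2(1) produces_refl a2(2) a2(2)] .
  then obtain \<alpha>' where a': "\<alpha>' \<in> \<Pi>" by blast
  have a'p: "producible Sy \<alpha>'" and a'R: "Rstar m R \<alpha>' = Pf L 0" using a' \<Pi>1 \<Pi>2 by auto
  have blk0: "nonempty_block m \<alpha>' 0" using NE a'R unfolding Pf_def by simp
  then obtain y0n where y0n: "y0n < m" "\<alpha>' (int y0n) \<noteq> None" unfolding nonempty_block_def by auto
  define y0 where "y0 = int y0n"
  have y0: "0 \<le> y0" "y0 < int m" "\<alpha>' y0 \<noteq> None" using y0n y0_def by auto
  have nbx: "x \<in> {-1, 0, 1}" if "nonempty_block m \<alpha>' x" for x
  proof -
    have "maps_cleanly m R \<alpha>'" using clean a'p by blast
    then show ?thesis unfolding maps_cleanly_def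
    proof
      assume "\<forall>x. nonempty_block m \<alpha>' x \<longrightarrow> (\<exists>y \<in> {x - 1, x, x + 1}. y \<in> dom (Rstar m R \<alpha>'))"
      then have "\<exists>y \<in> {x - 1, x, x + 1}. y \<in> dom (Rstar m R \<alpha>')" using that by blast
      then have "\<exists>y \<in> {x - 1, x, x + 1}. y \<in> {0..0}" unfolding a'R dom_P by simp
      then show ?thesis by auto
    next
      assume "\<forall>x y. nonempty_block m \<alpha>' x \<longrightarrow> nonempty_block m \<alpha>' y \<longrightarrow> x = y"
      then show ?thesis using that blk0 by blast
    qed
  qed
  have a'range: "- int m \<le> y \<and> y < 2 * int m" if "\<alpha>' y \<noteq> None" for y
  proof -
    have "y div int m \<in> {-1, 0, 1}" using nbx[OF nonempty_of[of \<alpha>' y m, OF that m0]] .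
    then have "-1 \<le> y div int m" "y div int m \<le> 1" by auto
    then show ?thesis using block_range[OF m0] by blast
  qed
  have a'fin: "finite (dom \<alpha>')"
  proof (rule finite_subset)
    show "dom \<alpha>' \<subseteq> {- int m..<2 * int m}" using a'range by (auto simp: domIff)
  qed simp
  have "produces Sy \<sigma>' \<alpha>'" using a'p prodS by simp
  then obtain g N where g: "g 0 = \<sigma>'" "seqok Sy g" "g N = \<alpha>'"
    using produces_reach[of Sy \<sigma>' \<alpha>'] a'fin by blast
  have a'inv: "is_assembly \<alpha>' \<and> ran \<alpha>' \<subseteq> U \<and> stable \<tau>' \<alpha>'"
    using seq_inv[of U \<sigma>' \<tau>' g N] g vs' unfolding Sy_def by simp
  have Lm: "L - 1 < L" using L0 by simp
  have h1: "\<forall>\<alpha>' \<in> \<Pi>. \<exists>\<beta>'. produces Sy \<alpha>' \<beta>' \<and> Rstar m R \<beta>' = Pf L (L - 1)"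
    using conjunct1[OF mp[OF mp[OF spec[OF \<Pi>3, of "Pf L (L - 1)"] prodP[OF Lm]] prodPP[OF Lm]]] .
  from bspec[OF h1 a'] obtain \<beta>' where b'1: "produces Sy \<alpha>' \<beta>'" and b'2: "Rstar m R \<beta>' = Pf L (L - 1)"
    by blast
  obtain f where f: "f 0 = \<alpha>'" "seqok Sy f" "\<beta>' = lim_seq f" using b'1 unfolding produces_iff by blast
  have finv: "is_assembly (f j) \<and> ran (f j) \<subseteq> U \<and> stable \<tau>' (f j)" for j
    using seq_inv[of U \<sigma>' \<tau>' f j] f a'inv unfolding Sy_def by simp
  have mf: "mseq f" using seq_mseq f(2) by blast
  have fmono: "f i \<subseteq>\<^sub>m f j" if "i \<le> j" for i j using mf that unfolding mseq_def by blast
  have a'f: "\<alpha>' \<subseteq>\<^sub>m f j" for j using fmono[of 0 j] f(1) by simp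
  have y0f: "f j y0 \<noteq> None" for j
  proof -
    have "y0 \<in> dom \<alpha>'" using y0(3) by (simp add: domIff)
    then have "\<alpha>' y0 = f j y0" using a'f[of j] unfolding map_le_def by blast
    then show ?thesis using y0(3) by simp
  qed
  have "Rstar m R \<beta>' (int L - 1) \<noteq> None" unfolding b'2 Pf_def using L0 by simp
  then have "nonempty_block m \<beta>' (int L - 1)" by (rule NE)
  then obtain zn where zn: "zn < m" "\<beta>' (int m * (int L - 1) + int zn) \<noteq> None"
    unfolding nonempty_block_def by blast
  define z where "z = int m * (int L - 1) + int zn"
  obtain v where "\<beta>' z = Some v" using zn(2) z_def by auto
  then have "\<exists>i. f i z = Some v" using lim_iff[OF mf] f(3) by simp
  then obtain i where fiz: "f i z = Some v" by blast
  have mn: "int n \<le> int m * int n"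
  proof -
    have "int n * 1 \<le> int n * int m" by (rule mult_left_mono) (use m0 in simp_all)
    then show ?thesis by (simp add: mult.commute)
  qed
  have e: "int m * (int L - 1) = int m * int n + 2 * int m" unfolding L_def by (simp add: algebra_simps)
  define a where "a = 2 * int m"
  have zge: "a + int n \<le> z" unfolding z_def a_def using e mn by linarith
  have cov: "f i (a + int j) \<noteq> None" if "j \<le> n" for j
  proof -
    have "y0 \<in> dom (f i)" "z \<in> dom (f i)" using y0f fiz by (auto simp: domIff)
    moreover have "y0 \<le> a + int j" "a + int j \<le> z" using y0 a_def zge that by auto
    ultimately have "a + int j \<in> dom (f i)" using asm_int finv by blast
    then show ?thesis by (simp add: domIff)
  qed
  define F where "F j = the (f i (a + int j))" for j
  have FU: "F ` {0..n} \<subseteq> U"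
  proof
    fix t assume "t \<in> F ` {0..n}"
    then obtain j where j: "j \<le> n" "t = F j" by auto
    then have "f i (a + int j) = Some t" using cov unfolding F_def by auto
    then have "t \<in> ran (f i)" unfolding ran_def by blast
    then show "t \<in> U" using finv by blast
  qed
  have "\<not> inj_on F {0..n}"
  proof
    assume "inj_on F {0..n}"
    then have "card {0..n} \<le> card U" using card_inj_on_le FU finU by blast
    then show False unfolding n_def by simp
  qed
  then obtain j1 j2 where j12: "j1 \<in> {0..n}" "j2 \<in> {0..n}" "F j1 = F j2" "j1 \<noteq> j2"
    unfolding inj_on_def by blast
  define jl where "jl = min j1 j2"
  define jh where "jh = max j1 j2"
  have jlh: "jl < jh" "jh \<le> n" "F jl = F jh" using j12 unfolding jl_def jh_def by (auto simp: min_def max_def)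
  define p where "p = a + int jl"
  define q where "q = a + int jh"
  have pq: "p < q" unfolding p_def q_def using jlh by simp
  have fpq: "f i p = f i q"
  proof -
    have "f i p = Some (F jl)" "f i q = Some (F jh)" unfolding p_def q_def F_def using cov jlh by auto
    then show ?thesis using jlh by simp
  qed
  have fiq: "f i q \<noteq> None" unfolding q_def using cov jlh by simp
  have exq: "\<exists>j. f j q \<noteq> None" using fiq by blast
  define i' where "i' = (LEAST j. f j q \<noteq> None)"
  have fi'q: "f i' q \<noteq> None" unfolding i'_def by (rule LeastI_ex[OF exq])
  have i'le: "i' \<le> i" unfolding i'_def by (rule Least_le) (rule fiq)
  have qa: "a \<le> q" "a \<le> p" unfolding q_def p_def by simp_all
  have "i' \<noteq> 0"
  proof
    assume "i' = 0"
    then have "\<alpha>' q \<noteq> None" using fi'q f(1) by simp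
    then show False using a'range qa a_def by fastforce
  qed
  then obtain i0 where i0: "i' = Suc i0" by (cases i') auto
  have fi0q: "f i0 q = None" using not_less_Least[of i0 "\<lambda>j. f j q \<noteq> None"] i0 unfolding i'_def by simp
  have "f (Suc i0) = f i0 \<or> step Sy (f i0) (f (Suc i0))" using f(2) unfolding seqok_def by blast
  then have "step Sy (f i0) (f i')" using fi0q fi'q i0 by auto
  then obtain pp t where ppt: "f i0 pp = None" "f i' = (f i0)(pp \<mapsto> t)" unfolding Sy_def step_triple by blast
  have "pp = q"
  proof (rule ccontr)
    assume "pp \<noteq> q"
    then have "f i' q = f i0 q" using ppt by simp
    then show False using fi0q fi'q by simp
  qed
  define FF where "FF = f i'"
  have FFinv: "is_assembly FF" "stable \<tau>' FF" "ran FF \<subseteq> U" using finv[of i'] unfolding FF_def by simp_all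
  have above: "\<forall>y>q. FF y = None"
  proof (intro allI impI)
    fix y assume yq: "q < y"
    then have "FF y = f i0 y" unfolding FF_def using ppt `pp = q` by simp
    moreover have "f i0 y = None"
    proof (rule ccontr)
      assume "f i0 y \<noteq> None"
      then have "y \<in> dom (f i0)" "y0 \<in> dom (f i0)" using y0f by (auto simp: domIff)
      moreover have "y0 \<le> q" using y0 qa a_def by simp
      moreover have "is_assembly (f i0)" using finv[of i0] by simp
      ultimately have "q \<in> dom (f i0)" using asm_int[of "f i0" y0 y q] yq by simp
      then show False using fi0q by (simp add: domIff)
    qed
    ultimately show "FF y = None" by simp
  qed
  have FFle: "FF \<subseteq>\<^sub>m f i" unfolding FF_def using fmono[OF i'le] .
  have FFq: "FF q \<noteq> None" unfolding FF_def by (rule fi'q)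
  have y0p: "y0 < p" using y0 qa a_def by simp
  have FFp: "FF p \<noteq> None"
  proof -
    have "y0 \<in> dom FF" "q \<in> dom FF" using y0f FFq unfolding FF_def by (auto simp: domIff)
    then have "p \<in> dom FF" using asm_int[OF FFinv(1), of y0 q p] y0p pq by simp
    then show ?thesis by (simp add: domIff)
  qed
  have FFpq: "FF p = FF q"
  proof -
    have "p \<in> dom FF" "q \<in> dom FF" using FFp FFq by (auto simp: domIff)
    then have "FF p = f i p" "FF q = f i q" using FFle unfolding map_le_def by blast+
    then show ?thesis using fpq by simp
  qed
  have FFy0: "FF y0 \<noteq> None" unfolding FF_def by (rule y0f)
  obtain \<gamma> where \<gamma>: "\<gamma> 0 = FF" "\<forall>k. step (U, \<sigma>', \<tau>') (\<gamma> k) (\<gamma> (Suc k))"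
     "\<forall>k y. p \<le> y \<longrightarrow> y \<le> q + int k \<longrightarrow> \<gamma> k y \<noteq> None" "\<forall>k y. y < p \<longrightarrow> \<gamma> k y = FF y"
    using pump[OF FFinv(1) FFinv(2) FFinv(3) pq FFpq FFq above FFy0 y0p, of \<sigma>'] by blast
  define X where "X = int L + 1"
  define K where "K = nat (int m * X)"
  have KX: "int K = int m * X" unfolding K_def X_def by simp
  define h where "h j = (if j \<le> i' then f j else \<gamma> (min (j - i') K))" for j
  have hs: "seqok Sy h" unfolding seqok_def
  proof
    fix j show "h (Suc j) = h j \<or> step Sy (h j) (h (Suc j))"
    proof (cases "Suc j \<le> i'")
      case True then show ?thesis using f(2) unfolding h_def seqok_def by simp
    next
      case False
      then have ji: "i' \<le> j" by simp
      have hj: "h j = \<gamma> (min (j - i') K)"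
      proof (cases "j = i'")
        case True then show ?thesis unfolding h_def using \<gamma>(1) FF_def by simp
      next
        case False then show ?thesis unfolding h_def using ji by simp
      qed
      have hs: "h (Suc j) = \<gamma> (min (Suc (j - i')) K)" unfolding h_def using ji False
        by (simp add: Suc_diff_le)
      show ?thesis
      proof (cases "j - i' < K")
        case True
        then have "min (Suc (j - i')) K = Suc (min (j - i') K)" by simp
        then show ?thesis using hj hs \<gamma>(2) unfolding Sy_def by simp
      next
        case False then show ?thesis using hj hs by simp
      qed
    qed
  qed
  have hK: "h (i' + K) = \<gamma> K"
  proof (cases "K = 0")
    case True then show ?thesis unfolding h_def using \<gamma>(1) FF_def by simp
  next
    case False then show ?thesis unfolding h_def by simp
  qed
  have hc: "\<forall>j\<ge>i' + K. h j = h (i' + K)"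
  proof (intro allI impI)
    fix j assume "i' + K \<le> j"
    have "h j = \<gamma> K"
    proof (cases "j \<le> i'")
      case True
      then have "K = 0" "j = i'" using `i' + K \<le> j` by auto
      then show ?thesis unfolding h_def using \<gamma>(1) FF_def by simp
    next
      case False then show ?thesis unfolding h_def using `i' + K \<le> j` by simp
    qed
    then show "h j = h (i' + K)" using hK by simp
  qed
  have h0: "h 0 = \<alpha>'" unfolding h_def using f(1) by simp
  have "produces Sy \<alpha>' (h (i' + K))" using produces_fin[of h \<alpha>' Sy "i' + K"] h0 hs hc by blast
  then have pr: "produces Sy \<alpha>' (\<gamma> K)" using hK by simp
  have "produces Sy \<sigma>' (\<gamma> K)" using produces_trans[OF `produces Sy \<sigma>' \<alpha>'` a'fin pr] .
  then have gp: "producible Sy (\<gamma> K)" using prodS by simp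
  obtain k' where k': "k' < L" "Rstar m R (\<gamma> K) = Pf L k'" using imgT[OF gp] by blast
  have mX: "p \<le> int m * X \<and> int m * X \<le> q + int K"
  proof -
    have "p \<le> a + int n" unfolding p_def using jlh by simp
    moreover have "int m * X = int m * int n + 4 * int m" unfolding X_def L_def by (simp add: algebra_simps)
    moreover have "0 \<le> q" unfolding q_def a_def by simp
    ultimately show ?thesis using mn KX a_def by linarith
  qed
  have nbX: "nonempty_block m (\<gamma> K) X"
  proof -
    have "\<gamma> K (int m * X + int 0) \<noteq> None" using \<gamma>(3) mX by simp
    then show ?thesis unfolding nonempty_block_def using m0 by blast
  qed
  have nb0: "nonempty_block m (\<gamma> K) 0"
  proof -
    have "\<gamma> K (int m * 0 + int y0n) \<noteq> None" using \<gamma>(4) y0p FFy0 y0_def by simp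
    then show ?thesis unfolding nonempty_block_def using y0n by blast
  qed
  have "maps_cleanly m R (\<gamma> K)" using clean gp by blast
  then show False unfolding maps_cleanly_def
  proof
    assume "\<forall>x. nonempty_block m (\<gamma> K) x \<longrightarrow> (\<exists>y \<in> {x - 1, x, x + 1}. y \<in> dom (Rstar m R (\<gamma> K)))"
    then have "\<exists>y \<in> {X - 1, X, X + 1}. y \<in> dom (Rstar m R (\<gamma> K))" using nbX by blast
    then have "\<exists>y \<in> {X - 1, X, X + 1}. y \<in> {0..int k'}" unfolding k'(2) dom_P by simp
    then show False using k'(1) X_def by auto
  next
    assume "\<forall>x y. nonempty_block m (\<gamma> K) x \<longrightarrow> nonempty_block m (\<gamma> K) y \<longrightarrow> x = y"
    then have "X = 0" using nbX nb0 by blast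
    then show False unfolding X_def by simp
  qed
qed

end
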